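(* Let $G$ be a graph with maximum degree at most $\Delta_{\max}$, let $t\in\mathbb{N}$, let $\eta\geq 0$, and let $c:E(G)\to[t]$ be a (not necessarily proper) edge-colouring such that for every edge $uv\in E(G)$ and every $i\in[t]$, $$s_{c(uv)}(u)+s_{c(uv)}(v)\leq \eta+s_i(u)+s_i(v).$$ If $uv\in E(G)$ satisfies $s_{c(uv)}(u)+s_{c(uv)}(v)=D$, then there exists a colour $\kappa\in[t]$ such that $s_\kappa(u)\geq D-\eta$.
   Context: For a vertex $v$ and colour $i\in[t]$, $d_i(v)$ is the number of edges of colour $i$ incident to $v$, and $s_i(v)=\max\{d_i(v)-\frac{\Delta_{\max}}{t},0\}$. *)

theory Defs
  imports Main Complex_Main
begin

definition simple_graph :: "'a set set \<Rightarrow> bool" where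
  "simple_graph E \<longleftrightarrow> finite E \<and> (\<forall>e\<in>E. card e = 2)"

definition degree :: "'a set set \<Rightarrow> 'a \<Rightarrow> nat" where
  "degree E v = card {e\<in>E. v \<in> e}"

definition col_deg :: "'a set set \<Rightarrow> ('a set \<Rightarrow> nat) \<Rightarrow> nat \<Rightarrow> 'a \<Rightarrow> nat" where
  "col_deg E c i v = card {e\<in>E. v \<in> e \<and> c e = i}"

definition surplus :: "'a set set \<Rightarrow> ('a set \<Rightarrow> nat) \<Rightarrow> nat \<Rightarrow> nat \<Rightarrow> nat \<Rightarrow> 'a \<Rightarrow> real" where
  "surplus E c Delta t i v = max (real (col_deg E c i v) - real Delta / real t) 0"

end

theory Submission
  imports Defs
begin

lemma sum_col_deg:
  assumes "finite E"
  shows "(\<Sum>i\<in>{1..t}. col_deg E c i v) \<le> degree E v"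
proof -
  have "(\<Sum>i\<in>{1..t}. col_deg E c i v) = card (\<Union>i\<in>{1..t}. {e\<in>E. v \<in> e \<and> c e = i})"
    unfolding col_deg_def
    by (rule card_UN_disjoint[symmetric]) (use assms in auto)
  also have "\<dots> \<le> card {e\<in>E. v \<in> e}"
    by (rule card_mono) (use assms in auto)
  finally show ?thesis unfolding degree_def .
qed

lemma exists_small:
  assumes "finite E" "degree E v \<le> Delta" "t \<ge> 1"
  shows "\<exists>i\<in>{1..t}. real (col_deg E c i v) \<le> real Delta / real t"
proof (rule ccontr)
  assume "\<not> ?thesis"
  hence h: "\<forall>i\<in>{1..t}. real Delta / real t < real (col_deg E c i v)" by auto
  have "(\<Sum>i\<in>{1..t}. real Delta / real t) < (\<Sum>i\<in>{1..t}. real (col_deg E c i v))"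
    by (rule sum_strict_mono) (use h assms in auto)
  also have "\<dots> = real (\<Sum>i\<in>{1..t}. col_deg E c i v)" by simp
  also have "\<dots> \<le> real Delta" using sum_col_deg[OF assms(1), where t=t and c=c and v=v] assms(2) by (metis le_trans of_nat_le_iff)
  finally show False using assms(3) by simp
qed

theorem lemma4p3:
  fixes E :: "'a set set" and c :: "'a set \<Rightarrow> nat" and Delta t :: nat
    and eta D :: real and u v :: 'a
  assumes "simple_graph E"
    and "\<forall>x. degree E x \<le> Delta"
    and "eta \<ge> 0"
    and "\<forall>e\<in>E. c e \<in> {1..t}"
    and "\<forall>x y i. {x, y} \<in> E \<and> i \<in> {1..t} \<longrightarrow>
          surplus E c Delta t (c {x, y}) x + surplus E c Delta t (c {x, y}) y
            \<le> eta + surplus E c Delta t i x + surplus E c Delta t i y"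
    and "{u, v} \<in> E"
    and "surplus E c Delta t (c {u, v}) u + surplus E c Delta t (c {u, v}) v = D"
  shows "\<exists>\<kappa>\<in>{1..t}. surplus E c Delta t \<kappa> u \<ge> D - eta"
proof -
  have fin: "finite E" using assms(1) unfolding simple_graph_def by auto
  have t1: "t \<ge> 1" using assms(4,6) by fastforce
  obtain i where i: "i \<in> {1..t}" "real (col_deg E c i v) \<le> real Delta / real t"
    using exists_small[OF fin _ t1] assms(2) by blast
  have s0: "surplus E c Delta t i v = 0" using i(2) unfolding surplus_def by simp
  have "D \<le> eta + surplus E c Delta t i u + surplus E c Delta t i v"
    using assms(5) assms(6) i(1) assms(7) by blast
  thus ?thesis using s0 i(1) by force
qed

end
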